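(* Let $X$ be a Hausdorff space. The following are equivalent: (a) $X$ is hereditarily disconnected; (b) there is a positive integer $n$ such that $\mathcal{F}_n(X)$ is hereditarily disconnected; (b') for every positive integer $n$, $\mathcal{F}_n(X)$ is hereditarily disconnected; (c) $\mathcal{F}(X)$ is hereditarily disconnected.
   Context: $\mathcal{F}(X)$ is the set of nonempty finite subsets of $X$ and $\mathcal{F}_n(X)$ the set of nonempty subsets with at most $n$ points, with the Vietoris topology (generated by $U^+=\{A: A\subset U\}$ and $U^-=\{A: A\cap U\neq\emptyset\}$ for $U$ open in $X$). A space is hereditarily disconnected if every nonempty connected subset is a singleton. *)

theory Defs
  imports "HOL-Analysis.Analysis"
begin

definition vietoris_on :: "'a topology \<Rightarrow> 'a set set \<Rightarrow> 'a set topology" where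
  "vietoris_on X \<H> = topology_generated_by
     ({{A \<in> \<H>. A \<subseteq> U} | U. openin X U} \<union> {{A \<in> \<H>. A \<inter> U \<noteq> {}} | U. openin X U})"

definition fin_subsets :: "'a topology \<Rightarrow> 'a set set" where
  "fin_subsets X = {A. A \<subseteq> topspace X \<and> finite A \<and> A \<noteq> {}}"

definition fin_subsets_le :: "nat \<Rightarrow> 'a topology \<Rightarrow> 'a set set" where
  "fin_subsets_le n X = {A. A \<subseteq> topspace X \<and> finite A \<and> A \<noteq> {} \<and> card A \<le> n}"

definition hyperspace_F :: "'a topology \<Rightarrow> 'a set topology" where
  "hyperspace_F X = vietoris_on X (fin_subsets X)"

definition hyperspace_Fn :: "nat \<Rightarrow> 'a topology \<Rightarrow> 'a set topology" where
  "hyperspace_Fn n X = vietoris_on X (fin_subsets_le n X)"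

definition hereditarily_disconnected :: "'a topology \<Rightarrow> bool" where
  "hereditarily_disconnected X \<longleftrightarrow>
     (\<forall>C. connectedin X C \<and> C \<noteq> {} \<longrightarrow> (\<exists>x. C = {x}))"

end

theory Submission
  imports Defs
begin

lemma vietoris_open_minus:
  assumes "openin X U"
  shows "openin (vietoris_on X H) {A \<in> H. A \<inter> U \<noteq> {}}"
  unfolding vietoris_on_def by (rule topology_generated_by_Basis) (use assms in blast)

lemma vietoris_open_plus:
  assumes "openin X U"
  shows "openin (vietoris_on X H) {A \<in> H. A \<subseteq> U}"
  unfolding vietoris_on_def by (rule topology_generated_by_Basis) (use assms in blast)

lemma lemmaK:
  assumes conn: "connectedin (vietoris_on X H) CC"
    and HX: "\<And>A. A \<in> H \<Longrightarrow> A \<subseteq> topspace X"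
    and V1: "openin (subtopology X (\<Union>CC)) V" and V2: "closedin (subtopology X (\<Union>CC)) V"
  shows "(\<forall>C\<in>CC. C \<inter> V = {}) \<or> (\<forall>C\<in>CC. C \<inter> V \<noteq> {})"
proof -
  let ?Y = "\<Union>CC"
  obtain U where U: "openin X U" "V = U \<inter> ?Y" using V1 by (auto simp: openin_subtopology)
  have "openin (subtopology X ?Y) (topspace (subtopology X ?Y) - V)"
    using V2 by (simp add: closedin_def)
  then obtain U' where U': "openin X U'" "topspace (subtopology X ?Y) - V = U' \<inter> ?Y"
    by (auto simp: openin_subtopology)
  have sub: "CC \<subseteq> topspace (vietoris_on X H)" using conn by (rule connectedin_subset_topspace)
  have CH: "CC \<subseteq> H"
  proof
    fix C assume "C \<in> CC"
    then have "C \<in> topspace (vietoris_on X H)" using sub by blast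
    then show "C \<in> H" unfolding vietoris_on_def by auto
  qed
  have Ytop: "?Y \<subseteq> topspace X" using CH HX by blast
  have U'eq: "?Y - V = U' \<inter> ?Y" using U'(2) Ytop by (simp add: Int_absorb1)
  let ?E1 = "{A \<in> H. A \<inter> U \<noteq> {}}" and ?E2 = "{A \<in> H. A \<subseteq> U'}"
  have o1: "openin (vietoris_on X H) ?E1" by (rule vietoris_open_minus[OF U(1)])
  have o2: "openin (vietoris_on X H) ?E2" by (rule vietoris_open_plus[OF U'(1)])
  have e1: "C \<in> ?E1 \<longleftrightarrow> C \<inter> V \<noteq> {}" if "C \<in> CC" for C
    using that CH U(2) by auto
  have e2: "C \<in> ?E2 \<longleftrightarrow> C \<inter> V = {}" if "C \<in> CC" for C
  proof -
    have "C \<subseteq> ?Y" using that by blast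
    then have "C \<inter> V = {} \<longleftrightarrow> C \<subseteq> ?Y - V" by blast
    also have "\<dots> \<longleftrightarrow> C \<subseteq> U'" using U'eq \<open>C \<subseteq> ?Y\<close> by blast
    finally show ?thesis using that CH by auto
  qed
  have "\<not> (CC \<subseteq> ?E1 \<union> ?E2 \<and> ?E1 \<inter> ?E2 \<inter> CC = {} \<and> ?E1 \<inter> CC \<noteq> {} \<and> ?E2 \<inter> CC \<noteq> {})"
  proof
    assume a: "CC \<subseteq> ?E1 \<union> ?E2 \<and> ?E1 \<inter> ?E2 \<inter> CC = {} \<and> ?E1 \<inter> CC \<noteq> {} \<and> ?E2 \<inter> CC \<noteq> {}"
    have nex: "\<nexists>E1 E2. openin (vietoris_on X H) E1 \<and> openin (vietoris_on X H) E2 \<and>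
             CC \<subseteq> E1 \<union> E2 \<and> E1 \<inter> E2 \<inter> CC = {} \<and> E1 \<inter> CC \<noteq> {} \<and> E2 \<inter> CC \<noteq> {}"
      using conn[unfolded connectedin] by (rule conjunct2)
    show False
      by (rule notE[OF nex], rule exI[of _ ?E1], rule exI[of _ ?E2]) (rule conjI[OF o1 conjI[OF o2 a]])
  qed
  moreover have "CC \<subseteq> ?E1 \<union> ?E2"
  proof
    fix C assume C: "C \<in> CC"
    show "C \<in> ?E1 \<union> ?E2" using e1[OF C] e2[OF C] by blast
  qed
  moreover have "?E1 \<inter> ?E2 \<inter> CC = {}"
  proof -
    have "C \<notin> ?E1 \<inter> ?E2" if C: "C \<in> CC" for C using e1[OF C] e2[OF C] by blast
    then show ?thesis by blast
  qed
  ultimately have "?E1 \<inter> CC = {} \<or> ?E2 \<inter> CC = {}" by blast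
  then show ?thesis
  proof
    assume "?E1 \<inter> CC = {}"
    have "\<forall>C\<in>CC. C \<inter> V = {}"
    proof
      fix C assume C: "C \<in> CC"
      have "C \<notin> ?E1" using C \<open>?E1 \<inter> CC = {}\<close> by blast
      show "C \<inter> V = {}"
      proof (rule ccontr)
        assume "C \<inter> V \<noteq> {}"
        then have "C \<in> ?E1" by (rule iffD2[OF e1[OF C]])
        then show False using \<open>C \<notin> ?E1\<close> by contradiction
      qed
    qed
    then show ?thesis by (rule disjI1)
  next
    assume "?E2 \<inter> CC = {}"
    have "\<forall>C\<in>CC. C \<inter> V \<noteq> {}"
    proof
      fix C assume C: "C \<in> CC"
      have "C \<notin> ?E2" using C \<open>?E2 \<inter> CC = {}\<close> by blast
      show "C \<inter> V \<noteq> {}"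
      proof
        assume "C \<inter> V = {}"
        then have "C \<in> ?E2" by (rule iffD2[OF e2[OF C]])
        then show False using \<open>C \<notin> ?E2\<close> by contradiction
      qed
    qed
    then show ?thesis by (rule disjI2)
  qed
qed

lemma HD_up:
  assumes hd: "hereditarily_disconnected X" and H: "H \<subseteq> fin_subsets X"
  shows "hereditarily_disconnected (vietoris_on X H)"
  unfolding hereditarily_disconnected_def
proof (intro allI impI)
  fix CC assume "connectedin (vietoris_on X H) CC \<and> CC \<noteq> {}"
  then have conn: "connectedin (vietoris_on X H) CC" and ne: "CC \<noteq> {}" by auto
  let ?Y = "\<Union>CC"
  let ?S = "subtopology X ?Y"
  have sub: "CC \<subseteq> topspace (vietoris_on X H)" using conn by (rule connectedin_subset_topspace)
  have CH: "CC \<subseteq> H"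
  proof
    fix C assume "C \<in> CC"
    then have "C \<in> topspace (vietoris_on X H)" using sub by blast
    then show "C \<in> H" unfolding vietoris_on_def by auto
  qed
  have HX: "\<And>A. A \<in> H \<Longrightarrow> A \<subseteq> topspace X" using H unfolding fin_subsets_def by blast
  have Ytop: "?Y \<subseteq> topspace X" using CH HX by blast
  have tsY: "topspace ?S = ?Y" using Ytop by auto
  have Yo: "openin ?S ?Y" by (metis tsY openin_topspace)
  have Yc: "closedin ?S ?Y" by (metis tsY closedin_topspace)
  have meetA: "A \<inter> Q \<noteq> {}" if "A \<in> CC" "openin ?S Q" "closedin ?S Q" "Q \<noteq> {}" for A Q
  proof -
    obtain z where "z \<in> Q" using \<open>Q \<noteq> {}\<close> by blast
    moreover have "Q \<subseteq> ?Y" using openin_subset[OF that(2)] by simp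
    ultimately obtain C where "C \<in> CC" "z \<in> C" by blast
    then have "\<not> (\<forall>C\<in>CC. C \<inter> Q = {})" using \<open>z \<in> Q\<close> by blast
    then show ?thesis using lemmaK[OF conn HX that(2,3)] that(1) by blast
  qed
  have YA: "?Y \<subseteq> A" if A: "A \<in> CC" for A
  proof
    fix y assume y: "y \<in> ?Y"
    have finA: "finite A" using A CH H unfolding fin_subsets_def by blast
    let ?P = "\<lambda>k. \<exists>Q. openin ?S Q \<and> closedin ?S Q \<and> y \<in> Q \<and> card (A \<inter> Q) = k"
    have P0: "?P (card (A \<inter> ?Y))"
      using y Yo Yc by blast
    define k where "k = (LEAST m. ?P m)"
    have Pk: "?P k" unfolding k_def using P0 by (rule LeastI)
    have kmin: "k \<le> m" if "?P m" for m unfolding k_def using that by (rule Least_le)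
    from Pk obtain Q where Q: "openin ?S Q" "closedin ?S Q" "y \<in> Q" "card (A \<inter> Q) = k" by blast
    have QY: "Q \<subseteq> ?Y" using openin_subset[OF Q(1)] by simp
    have less: "card (A \<inter> T) < card (A \<inter> Q)"
      if "T \<subseteq> Q" "openin ?S (Q - T)" "closedin ?S (Q - T)" "Q - T \<noteq> {}" for T
    proof -
      have "A \<inter> (Q - T) \<noteq> {}" using meetA[OF A that(2,3,4)] .
      then have "A \<inter> T \<subset> A \<inter> Q" using that(1) by blast
      then show ?thesis using finA by (simp add: psubset_card_mono)
    qed
    have connQ: "connectedin X Q"
      unfolding connectedin_def
    proof
      show "Q \<subseteq> topspace X" using QY Ytop by blast
      show "connected_space (subtopology X Q)"
        unfolding connected_space_clopen_in
      proof (intro allI impI)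
        fix T assume T: "openin (subtopology X Q) T \<and> closedin (subtopology X Q) T"
        have sQ: "subtopology X Q = subtopology ?S Q"
          using QY by (simp add: subtopology_subtopology Int_absorb1)
        have TQ: "T \<subseteq> Q" using T openin_subset by fastforce
        have To: "openin ?S T" using T Q(1) sQ openin_open_subtopology by metis
        have Tc: "closedin ?S T" using T Q(2) sQ closedin_closed_subtopology by metis
        have Do: "openin ?S (Q - T)" using Q(1) Tc by (simp add: openin_diff)
        have Dc: "closedin ?S (Q - T)" using Q(2) To by (simp add: closedin_diff)
        have tsQ: "topspace (subtopology X Q) = Q" using QY Ytop by auto
        show "T = {} \<or> T = topspace (subtopology X Q)"
        proof (cases "y \<in> T")
          case True
          have "Q - T = {}"
          proof (rule ccontr)
            assume "Q - T \<noteq> {}"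
            then have "card (A \<inter> T) < k" using less[OF TQ Do Dc] Q(4) by simp
            moreover have "?P (card (A \<inter> T))" using To Tc True by blast
            ultimately show False using kmin by fastforce
          qed
          then show ?thesis using TQ tsQ by blast
        next
          case False
          have "T = {}"
          proof (rule ccontr)
            assume "T \<noteq> {}"
            have "Q - (Q - T) = T" using TQ by blast
            then have "card (A \<inter> (Q - T)) < k"
              using less[of "Q - T"] To Tc \<open>T \<noteq> {}\<close> Q(4) by auto
            moreover have "?P (card (A \<inter> (Q - T)))" using Do Dc False Q(3) by blast
            ultimately show False using kmin by fastforce
          qed
          then show ?thesis by blast
        qed
      qed
    qed
    then obtain x where "Q = {x}" using hd Q(3) unfolding hereditarily_disconnected_def by blast
    then have "Q = {y}" using Q(3) by blast
    moreover have "A \<inter> Q \<noteq> {}" using meetA[OF A Q(1,2)] Q(3) by blast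
    ultimately show "y \<in> A" by blast
  qed
  have eqY: "A = ?Y" if A: "A \<in> CC" for A
    by (rule subset_antisym[OF Union_upper[OF A] YA[OF A]])
  have "CC = {?Y}"
  proof
    show "CC \<subseteq> {?Y}" using eqY by blast
    show "{?Y} \<subseteq> CC" using ne eqY by fastforce
  qed
  then show "\<exists>x. CC = {x}" by blast
qed

lemma HD_down:
  assumes hd: "hereditarily_disconnected (vietoris_on X H)"
    and H: "\<And>x. x \<in> topspace X \<Longrightarrow> {x} \<in> H"
  shows "hereditarily_disconnected X"
  unfolding hereditarily_disconnected_def
proof (intro allI impI)
  fix C assume C: "connectedin X C \<and> C \<noteq> {}"
  have cm: "continuous_map X (vietoris_on X H) (\<lambda>x. {x})"
    unfolding vietoris_on_def
  proof (rule continuous_on_generated_topo)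
    fix U assume "U \<in> {{A \<in> H. A \<subseteq> U} |U. openin X U} \<union> {{A \<in> H. A \<inter> U \<noteq> {}} |U. openin X U}"
    then consider (p) W where "openin X W" "U = {A \<in> H. A \<subseteq> W}"
      | (m) W where "openin X W" "U = {A \<in> H. A \<inter> W \<noteq> {}}"
      by (elim UnE CollectE exE conjE) (auto)
    then show "openin X ((\<lambda>x. {x}) -` U \<inter> topspace X)"
    proof cases
      case (p W)
      have "(\<lambda>x. {x}) -` U \<inter> topspace X = W \<inter> topspace X"
      proof (rule set_eqI)
        fix x show "x \<in> (\<lambda>x. {x}) -` U \<inter> topspace X \<longleftrightarrow> x \<in> W \<inter> topspace X"
          using H[of x] p(2) by auto
      qed
      then show ?thesis using p(1) by (simp add: openin_Int openin_topspace)
    next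
      case (m W)
      have "(\<lambda>x. {x}) -` U \<inter> topspace X = W \<inter> topspace X"
      proof (rule set_eqI)
        fix x show "x \<in> (\<lambda>x. {x}) -` U \<inter> topspace X \<longleftrightarrow> x \<in> W \<inter> topspace X"
          using H[of x] m(2) by auto
      qed
      then show ?thesis using m(1) by (simp add: openin_Int openin_topspace)
    qed
  next
    show "(\<lambda>x. {x}) ` topspace X \<subseteq> \<Union> ({{A \<in> H. A \<subseteq> U} |U. openin X U} \<union> {{A \<in> H. A \<inter> U \<noteq> {}} |U. openin X U})"
    proof
      fix s assume "s \<in> (\<lambda>x. {x}) ` topspace X"
      then obtain x where x: "x \<in> topspace X" "s = {x}" by blast
      have "s \<in> {A \<in> H. A \<subseteq> topspace X}" using x H by simp
      moreover have "{A \<in> H. A \<subseteq> topspace X} \<in> {{A \<in> H. A \<subseteq> U} |U. openin X U}"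
        by (rule CollectI, rule exI[of _ "topspace X"]) simp
      ultimately show "s \<in> \<Union> ({{A \<in> H. A \<subseteq> U} |U. openin X U} \<union> {{A \<in> H. A \<inter> U \<noteq> {}} |U. openin X U})"
        by (intro UnionI[OF UnI1]) 
    qed
  qed
  have imgc: "connectedin (vietoris_on X H) ((\<lambda>x. {x}) ` C)"
    by (rule connectedin_continuous_map_image[OF cm conjunct1[OF C]])
  have imgne: "(\<lambda>x. {x}) ` C \<noteq> {}" using conjunct2[OF C] by simp
  obtain s where s: "(\<lambda>x. {x}) ` C = {s}"
    using hd[unfolded hereditarily_disconnected_def, rule_format, OF conjI[OF imgc imgne]] by (elim exE)
  obtain c where c: "c \<in> C" using conjunct2[OF C] by blast
  have "C = {c}"
  proof
    show "C \<subseteq> {c}"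
    proof
      fix d assume d: "d \<in> C"
      have "{d} = s" using s d by (metis imageI singletonD)
      moreover have "{c} = s" using s c by (metis imageI singletonD)
      ultimately have "{d} = {c}" by (rule trans[OF _ sym])
      then show "d \<in> {c}" by simp
    qed
    show "{c} \<subseteq> C" using c by simp
  qed
  then show "\<exists>x. C = {x}" by (rule exI)
qed

theorem corollary5p10:
  fixes X :: "'a topology"
  assumes "Hausdorff_space X"
  shows "(hereditarily_disconnected X
            \<longleftrightarrow> (\<exists>n::nat. n \<ge> 1 \<and> hereditarily_disconnected (hyperspace_Fn n X)))
       \<and> (hereditarily_disconnected X
            \<longleftrightarrow> (\<forall>n::nat. n \<ge> 1 \<longrightarrow> hereditarily_disconnected (hyperspace_Fn n X)))
       \<and> (hereditarily_disconnected X \<longleftrightarrow> hereditarily_disconnected (hyperspace_F X))"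
proof -
  have up: "hereditarily_disconnected (hyperspace_Fn n X)" if "hereditarily_disconnected X" for n
    unfolding hyperspace_Fn_def
    by (rule HD_up[OF that]) (auto simp: fin_subsets_def fin_subsets_le_def)
  have down: "hereditarily_disconnected X" if "n \<ge> 1" "hereditarily_disconnected (hyperspace_Fn n X)" for n
    using that unfolding hyperspace_Fn_def
    by (intro HD_down[of X "fin_subsets_le n X"]) (auto simp: fin_subsets_le_def)
  have upF: "hereditarily_disconnected (hyperspace_F X)" if "hereditarily_disconnected X"
    unfolding hyperspace_F_def by (rule HD_up[OF that]) simp
  have downF: "hereditarily_disconnected X" if "hereditarily_disconnected (hyperspace_F X)"
    using that unfolding hyperspace_F_def
    by (intro HD_down[of X "fin_subsets X"]) (auto simp: fin_subsets_def)
  show ?thesis using up down upF downF by blast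
qed

end
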